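(* For any $b,c,d\in\mathbb C\setminus\{-1,-2,-3,\dots\}$, with $f$ as defined in the context: (1) $f(b,b)=1$; (2) $f(b,c)f(c,d)=f(b,d)$; (3) $\displaystyle f(b,c)=\left(\frac{c+1}{b+1}\right)f\left(\frac b2,\frac c2\right)f\left(\frac{c+1}{2},\frac{b+1}{2}\right)$.
   Context: Let $u_n=(-1)^{s_2(n)}$, where $s_2(n)$ is the sum of the binary digits of the non-negative integer $n$ (Thue–Morse sequence with values $\pm1$). For $b,c\in\mathbb C\setminus\{-1,-2,-3,\dots\}$ define $f(b,c)=\prod_{n=1}^\infty\left(\frac{n+b}{n+c}\right)^{u_n}$ (limit of partial products; this product converges for all such $b,c$). *)

theory Defs
  imports "HOL-Analysis.Analysis"
begin

fun s2 :: "nat \<Rightarrow> nat" where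
  "s2 n = (if n = 0 then 0 else n mod 2 + s2 (n div 2))"

declare s2.simps[simp del]

definition tm :: "nat \<Rightarrow> int" where
  "tm n = (-1) ^ s2 n"

definition admissible :: "complex \<Rightarrow> bool" where
  "admissible z \<longleftrightarrow> (\<forall>n::nat. n \<ge> 1 \<longrightarrow> z \<noteq> - of_nat n)"

definition tmf :: "complex \<Rightarrow> complex \<Rightarrow> complex" where
  "tmf b c = lim (\<lambda>N. \<Prod>n=1..N. ((of_nat n + b) / (of_nat n + c)) powi tm n)"

end

theory Submission
  imports Defs
begin

lemma s2_even: "s2 (2*m) = s2 m"
  by (cases "m = 0") (simp_all add: s2.simps[of "2*m"] s2.simps[of 0])

lemma s2_odd: "s2 (2*m+1) = s2 m + 1"
  by (subst s2.simps) simp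

lemma tm_even: "tm (2*m) = tm m"
  by (simp add: tm_def s2_even)

lemma tm_odd: "tm (2*m+1) = - tm m"
  unfolding tm_def s2_odd by simp

lemma tm_cases: "tm n = 1 \<or> tm n = -1"
  unfolding tm_def by (cases "even (s2 n)") auto

definition F :: "complex \<Rightarrow> complex \<Rightarrow> nat \<Rightarrow> complex" where
  "F b c n = ((of_nat n + b) / (of_nat n + c)) powi tm n"

definition P :: "complex \<Rightarrow> complex \<Rightarrow> nat \<Rightarrow> complex" where
  "P b c N = (\<Prod>n=1..N. F b c n)"

lemma tmf_P: "tmf b c = lim (P b c)"
  unfolding tmf_def P_def F_def by (rule refl)

lemma adm_ne: "admissible b \<Longrightarrow> n \<ge> 1 \<Longrightarrow> of_nat n + b \<noteq> 0"
  unfolding admissible_def by (metis add.commute add_eq_0_iff)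

lemma powi_cases: fixes x :: complex shows "tm n = 1 \<Longrightarrow> x powi tm n = x" "tm n = -1 \<Longrightarrow> x powi tm n = inverse x"
  by (simp_all add: power_int_def)

lemma P_Suc: "P b c (Suc N) = P b c N * F b c (Suc N)"
  by (simp add: P_def)

lemma P_0: "P b c 0 = 1"
  by (simp add: P_def)

lemma tm_0: "tm 0 = 1"
  by (simp add: tm_def s2.simps)

lemma tm_1: "tm 1 = -1"
  using tm_odd[of 0] tm_0 by simp

lemma frac_identity:
  fixes x y a b :: complex
  assumes n1: "a + y \<noteq> 0" and n2: "b + x \<noteq> 0" and ab: "b = a + 1"
  shows "(a + x) / (a + y) * inverse ((b + x) / (b + y)) - 1 = (x - y) / ((a + y) * (b + x))"
proof -
  have nz: "(a + y) * (b + x) \<noteq> 0" using n1 n2 by simp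
  have "(a + x) / (a + y) * inverse ((b + x) / (b + y)) = ((a + x) * (b + y)) / ((a + y) * (b + x))"
    by (simp add: inverse_divide)
  also have "\<dots> - 1 = ((a + x) * (b + y) - (a + y) * (b + x)) / ((a + y) * (b + x))"
    using nz by (simp add: diff_divide_distrib)
  also have "(a + x) * (b + y) - (a + y) * (b + x) = x - y" using ab by (simp add: algebra_simps)
  finally show ?thesis .
qed

lemma pair_bound:
  fixes x y :: complex and m :: nat
  assumes "norm x \<le> real m" "norm y \<le> real m" "m \<ge> 1"
  shows "norm ((of_nat (2*m) + x) / (of_nat (2*m) + y) * inverse ((of_nat (2*m+1) + x) / (of_nat (2*m+1) + y)) - 1)
           \<le> norm (x - y) / (real m)^2"
proof -
  have d1: "norm (of_nat (2*m) + y) \<ge> real m"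
  proof -
    have "norm (of_nat (2*m) :: complex) - norm y \<le> norm (of_nat (2*m) + y)"
      by (metis norm_diff_ineq)
    moreover have "norm (of_nat (2*m) :: complex) = 2 * real m" by simp
    ultimately show ?thesis using assms by linarith
  qed
  have d2: "norm (of_nat (2*m+1) + x) \<ge> real m"
  proof -
    have "norm (of_nat (2*m+1) :: complex) - norm x \<le> norm (of_nat (2*m+1) + x)"
      by (metis norm_diff_ineq)
    moreover have "norm (of_nat (2*m+1) :: complex) = 2 * real m + 1"
      by (metis norm_of_nat of_nat_Suc of_nat_mult of_nat_numeral add.commute Suc_eq_plus1)
    ultimately show ?thesis using assms by linarith
  qed
  have m0: "real m > 0" using assms by simp
  have n1: "of_nat (2*m) + y \<noteq> 0" using d1 m0 by auto
  have n2: "of_nat (2*m+1) + x \<noteq> 0" using d2 m0 by auto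
  have eq: "(of_nat (2*m) + x) / (of_nat (2*m) + y) * inverse ((of_nat (2*m+1) + x) / (of_nat (2*m+1) + y)) - 1
        = (x - y) / ((of_nat (2*m) + y) * (of_nat (2*m+1) + x))"
    by (rule frac_identity) (use n1 n2 in simp_all)
  have "norm ((x - y) / ((of_nat (2*m) + y) * (of_nat (2*m+1) + x)))
        = norm (x - y) / (norm (of_nat (2*m) + y) * norm (of_nat (2*m+1) + x))"
      by (simp add: norm_divide norm_mult)
  also have "\<dots> \<le> norm (x - y) / (real m * real m)"
  proof -
    have le: "real m * real m \<le> norm (of_nat (2*m) + y) * norm (of_nat (2*m+1) + x)"
      using d1 d2 m0 by (intro mult_mono) auto
    have pos: "0 < norm (of_nat (2*m) + y) * norm (of_nat (2*m+1) + x) * (real m * real m)"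
      using d1 d2 m0 by (intro mult_pos_pos) auto
    show ?thesis by (rule divide_left_mono[OF le norm_ge_zero pos])
  qed
  finally show ?thesis using eq by (simp add: power2_eq_square)
qed

lemma even_odd_lim:
  fixes X :: "nat \<Rightarrow> 'a::metric_space"
  assumes "(\<lambda>n. X (2*n)) \<longlonglongrightarrow> L" "(\<lambda>n. X (2*n+1)) \<longlonglongrightarrow> L"
  shows "X \<longlonglongrightarrow> L"
  unfolding lim_sequentially
proof (intro allI impI)
  fix r :: real assume r: "r > 0"
  obtain N1 where N1: "\<forall>n\<ge>N1. dist (X (2*n)) L < r"
    using assms(1) r unfolding lim_sequentially by blast
  obtain N2 where N2: "\<forall>n\<ge>N2. dist (X (2*n+1)) L < r"
    using assms(2) r unfolding lim_sequentially by blast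
  show "\<exists>no. \<forall>n\<ge>no. dist (X n) L < r"
  proof (intro exI allI impI)
    fix n assume n: "n \<ge> 2*(N1+N2)"
    show "dist (X n) L < r"
    proof (cases "even n")
      case True
      then obtain k where k: "n = 2*k" by blast
      then have "k \<ge> N1" using n by simp
      then show ?thesis using N1 k by simp
    next
      case False
      then obtain k where k: "n = 2*k+1" using oddE by blast
      then have "k \<ge> N2" using n by simp
      then show ?thesis using N2 k by simp
    qed
  qed
qed

lemma R_lim: "(\<lambda>n. (of_nat n + b) / (of_nat n + c)) \<longlonglongrightarrow> (1::complex)"
proof -
  have "(\<lambda>n. (1 + b * inverse (of_nat n)) / (1 + c * inverse (of_nat n))) \<longlonglongrightarrow> (1 + b * 0) / (1 + c * 0)"
    by (intro tendsto_intros lim_inverse_n) simp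
  then have lim: "(\<lambda>n. (1 + b * inverse (of_nat n)) / (1 + c * inverse (of_nat n))) \<longlonglongrightarrow> 1"
    by simp
  have ev: "eventually (\<lambda>n. (1 + b * inverse (of_nat n)) / (1 + c * inverse (of_nat n)) = (of_nat n + b) / (of_nat n + c)) sequentially"
    using eventually_gt_at_top[of "0::nat"]
  proof eventually_elim
    case (elim n)
    then have nz: "(of_nat n :: complex) \<noteq> 0" by simp
    have 1: "1 + b * inverse (of_nat n) = (of_nat n + b) * inverse (of_nat n)"
      using nz by (simp add: field_simps)
    have 2: "1 + c * inverse (of_nat n) = (of_nat n + c) * inverse (of_nat n)"
      using nz by (simp add: field_simps)
    show ?case unfolding 1 2 using nz by simp
  qed
  show ?thesis by (rule Lim_transform_eventually[OF lim ev])
qed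

lemma F_lim: "F b c \<longlonglongrightarrow> 1"
proof -
  let ?R = "\<lambda>n. (of_nat n + b) / (of_nat n + c)"
  have R: "?R \<longlonglongrightarrow> 1" by (rule R_lim)
  have R1: "(\<lambda>n. ?R n - 1) \<longlonglongrightarrow> 0" using R by (rule LIM_zero)
  have "(\<lambda>n. inverse (?R n)) \<longlonglongrightarrow> inverse 1" by (rule tendsto_inverse[OF R]) simp
  then have R2: "(\<lambda>n. inverse (?R n) - 1) \<longlonglongrightarrow> 0" by (intro LIM_zero) simp
  have g: "(\<lambda>n. norm (?R n - 1) + norm (inverse (?R n) - 1)) \<longlonglongrightarrow> 0"
    using tendsto_add_zero[OF tendsto_norm_zero[OF R1] tendsto_norm_zero[OF R2]] by simp
  have "(\<lambda>n. F b c n - 1) \<longlonglongrightarrow> 0"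
  proof (rule Lim_null_comparison[OF _ g])
    show "eventually (\<lambda>n. norm (F b c n - 1) \<le> norm (?R n - 1) + norm (inverse (?R n) - 1)) sequentially"
    proof (rule always_eventually, intro allI)
      fix n
      show "norm (F b c n - 1) \<le> norm (?R n - 1) + norm (inverse (?R n) - 1)"
        using tm_cases[of n] by (auto simp: F_def powi_cases)
    qed
  qed
  then show ?thesis by (simp add: LIM_zero_iff)
qed

lemma P_conv:
  assumes "admissible b" "admissible c"
  shows "convergent (P b c)"
proof -
  define G where "G m = F b c (2*(m+1)) * F b c (2*(m+1)+1)" for m
  have odd: "P b c (2*M+1) = F b c 1 * (\<Prod>m<M. G m)" for M
  proof (induction M)
    case 0
    show ?case by (simp add: P_def)
  next
    case (Suc M)
    have "P b c (2*Suc M+1) = P b c (2*M+1) * F b c (2*(M+1)) * F b c (2*(M+1)+1)"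
      by (simp add: P_Suc)
    then show ?case using Suc by (simp add: G_def mult_ac)
  qed
  obtain K :: nat where K: "norm b + norm c \<le> real K"
    using real_arch_simple by blast
  have sumG: "summable (\<lambda>m. norm (G m - 1))"
  proof (rule summable_comparison_test_ev)
    have "summable (\<lambda>n. inverse (real n ^ 2))"
      by (rule inverse_power_summable) simp
    then have "summable (\<lambda>n. inverse (real (Suc n) ^ 2))"
      by (subst summable_Suc_iff)
    then show "summable (\<lambda>m. norm (b - c) * inverse (real (Suc m) ^ 2))"
      by (rule summable_mult)
    show "eventually (\<lambda>m. norm (norm (G m - 1)) \<le> norm (b - c) * inverse (real (Suc m) ^ 2)) sequentially"
      using eventually_ge_at_top[of K]
    proof eventually_elim
      case (elim m)
      have nb: "norm b \<le> real (Suc m)" "norm c \<le> real (Suc m)" "Suc m \<ge> 1"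
      proof -
        have "real K \<le> real m" using elim by simp
        moreover have "real (Suc m) = real m + 1" by simp
        ultimately show "norm b \<le> real (Suc m)" "norm c \<le> real (Suc m)" "Suc m \<ge> 1"
          using K norm_ge_zero[of b] norm_ge_zero[of c] by linarith+
      qed
      have "norm (G m - 1) \<le> norm (b - c) / (real (Suc m))^2"
        using tm_cases[of "Suc m"]
      proof
        assume t: "tm (Suc m) = 1"
        have Geq: "G m = (of_nat (2*Suc m) + b) / (of_nat (2*Suc m) + c) * inverse ((of_nat (2*Suc m+1) + b) / (of_nat (2*Suc m+1) + c))"
          unfolding G_def F_def using t tm_even[of "Suc m"] tm_odd[of "Suc m"]
          by (simp add: powi_cases)
        show ?thesis unfolding Geq by (rule pair_bound) (use nb in auto)
      next
        assume t: "tm (Suc m) = -1"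
        have Geq: "G m = (of_nat (2*Suc m) + c) / (of_nat (2*Suc m) + b) * inverse ((of_nat (2*Suc m+1) + c) / (of_nat (2*Suc m+1) + b))"
          unfolding G_def F_def using t tm_even[of "Suc m"] tm_odd[of "Suc m"]
          by (simp add: powi_cases)
        have "norm (G m - 1) \<le> norm (c - b) / (real (Suc m))^2"
          unfolding Geq by (rule pair_bound) (use nb in auto)
        then show ?thesis by (simp add: norm_minus_commute)
      qed
      then show ?case by (simp add: divide_inverse)
    qed
  qed
  have cp: "convergent_prod G"
    using sumG by (intro abs_convergent_prod_imp_convergent_prod summable_imp_abs_convergent_prod)
  then have "(\<lambda>n. \<Prod>i\<le>n. G i) \<longlonglongrightarrow> prodinf G" by (rule convergent_prod_LIMSEQ)
  then have "(\<lambda>M. \<Prod>i<Suc M. G i) \<longlonglongrightarrow> prodinf G" by (simp add: lessThan_Suc_atMost)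
  then have lim1: "(\<lambda>M. \<Prod>i<M. G i) \<longlonglongrightarrow> prodinf G"
    by (rule LIMSEQ_imp_Suc[where f="\<lambda>M. \<Prod>i<M. G i"])
  define L where "L = F b c 1 * prodinf G"
  have oddlim: "(\<lambda>M. P b c (2*M+1)) \<longlonglongrightarrow> L"
    unfolding odd L_def by (intro tendsto_mult tendsto_const lim1)
  have sm: "strict_mono (\<lambda>M::nat. 2*M+2)" by (rule strict_monoI) simp
  have "(F b c \<circ> (\<lambda>M::nat. 2*M+2)) \<longlonglongrightarrow> 1" by (rule LIMSEQ_subseq_LIMSEQ[OF F_lim sm])
  then have Flim: "(\<lambda>M. F b c (2*M+2)) \<longlonglongrightarrow> 1" by (simp add: o_def)
  have "(\<lambda>M. P b c (2*M+1) * F b c (2*M+2)) \<longlonglongrightarrow> L * 1" by (intro tendsto_mult oddlim Flim)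
  moreover have "P b c (2*Suc M) = P b c (2*M+1) * F b c (2*M+2)" for M
    by (simp add: P_Suc)
  ultimately have "(\<lambda>M. P b c (2*Suc M)) \<longlonglongrightarrow> L" by simp
  then have evenlim: "(\<lambda>M. P b c (2*M)) \<longlonglongrightarrow> L"
    by (rule LIMSEQ_imp_Suc[where f="\<lambda>M. P b c (2*M)"])
  have "P b c \<longlonglongrightarrow> L" by (rule even_odd_lim[OF evenlim oddlim])
  then show ?thesis by (rule convergentI)
qed

lemma P_mult:
  assumes "admissible c"
  shows "P b c N * P c d N = P b d N"
  unfolding P_def prod.distrib[symmetric]
proof (rule prod.cong[OF refl])
  fix n assume "n \<in> {1..N}"
  then have ne: "of_nat n + c \<noteq> 0" using adm_ne[OF assms] by simp
  show "F b c n * F c d n = F b d n"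
    unfolding F_def power_int_mult_distrib[symmetric] using ne by simp
qed

lemma P_same:
  assumes "admissible b"
  shows "P b b N = 1"
  unfolding P_def
proof (rule prod.neutral, intro ballI)
  fix n assume "n \<in> {1..N}"
  then have ne: "of_nat n + b \<noteq> 0" using adm_ne[OF assms] by simp
  show "F b b n = 1" unfolding F_def using ne by simp
qed

lemma half_div: "(x/2)/(y/2) = x/(y::complex)"
  by (simp add: divide_divide_eq_left divide_divide_eq_right)

lemma tm_Suc0: "tm (Suc 0) = -1"
  using tm_1 by simp

lemma F_half1: "F b c (2*k) = F (b/2) (c/2) k"
proof -
  have 1: "of_nat k + b/2 = (of_nat (2*k) + b)/2" "of_nat k + c/2 = (of_nat (2*k) + c)/2"
    by (simp_all add: field_simps)
  show ?thesis unfolding F_def tm_even 1 half_div ..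
qed

lemma F_half2: "F b c (2*k+1) = F ((c+1)/2) ((b+1)/2) k"
proof -
  have 1: "of_nat k + (c+1)/2 = (of_nat (2*k+1) + c)/2" "of_nat k + (b+1)/2 = (of_nat (2*k+1) + b)/2"
    by (simp_all add: field_simps)
  have "F b c (2*k+1) = ((of_nat (2*k+1) + c) / (of_nat (2*k+1) + b)) powi tm k"
    unfolding F_def tm_odd power_int_minus power_int_inverse[symmetric] by simp
  also have "\<dots> = F ((c+1)/2) ((b+1)/2) k" unfolding F_def 1 half_div ..
  finally show ?thesis .
qed

lemma P_split: "P b c (2*M+1) = ((c + 1) / (b + 1)) * P (b/2) (c/2) M * P ((c+1)/2) ((b+1)/2) M"
proof (induction M)
  case 0
  show ?case by (simp add: P_def F_def tm_Suc0 power_int_minus inverse_divide add.commute)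
next
  case (Suc M)
  have "P b c (2*Suc M+1) = P b c (2*M+1) * F b c (2*Suc M) * F b c (2*Suc M+1)"
    by (simp add: P_Suc)
  also have "\<dots> = P b c (2*M+1) * F (b/2) (c/2) (Suc M) * F ((c+1)/2) ((b+1)/2) (Suc M)"
    by (simp only: F_half1 F_half2)
  also have "\<dots> = ((c + 1) / (b + 1)) * P (b/2) (c/2) (Suc M) * P ((c+1)/2) ((b+1)/2) (Suc M)"
    unfolding Suc.IH by (simp only: P_Suc mult_ac)
  finally show ?case .
qed

lemma adm_half:
  assumes "admissible b"
  shows "admissible (b/2)" "admissible ((b+1)/2)"
proof -
  show "admissible (b/2)"
    unfolding admissible_def
  proof (intro allI impI notI)
    fix n :: nat assume n: "n \<ge> 1" "b/2 = - of_nat n"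
    then have "b = - of_nat (2*n)" by (simp add: field_simps)
    moreover have "2*n \<ge> 1" using n by simp
    ultimately show False using assms unfolding admissible_def by blast
  qed
  show "admissible ((b+1)/2)"
    unfolding admissible_def
  proof (intro allI impI notI)
    fix n :: nat assume n: "n \<ge> 1" "(b+1)/2 = - of_nat n"
    then have "b + 1 = - 2 * of_nat n" by (simp add: field_simps)
    then have "b = - 2 * of_nat n - 1" by (simp add: algebra_simps)
    then have "b = - of_nat (2*n+1)" by simp
    moreover have "2*n+1 \<ge> 1" by simp
    ultimately show False using assms unfolding admissible_def by blast
  qed
qed

lemma P_lim: "admissible b \<Longrightarrow> admissible c \<Longrightarrow> P b c \<longlonglongrightarrow> tmf b c"
  unfolding tmf_P using P_conv convergent_LIMSEQ_iff by blast

theorem lemma2: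
  fixes b c d :: complex
  assumes "admissible b" and "admissible c" and "admissible d"
  shows "tmf b b = 1 \<and>
         tmf b c * tmf c d = tmf b d \<and>
         tmf b c = ((c + 1) / (b + 1)) * tmf (b / 2) (c / 2) * tmf ((c + 1) / 2) ((b + 1) / 2)"
proof (intro conjI)
  have "P b b = (\<lambda>_. 1)" using P_same[OF assms(1)] by auto
  then show "tmf b b = 1" unfolding tmf_P by (simp add: limI)
next
  have "(\<lambda>N. P b c N * P c d N) \<longlonglongrightarrow> tmf b c * tmf c d"
    by (intro tendsto_mult P_lim assms)
  then have "P b d \<longlonglongrightarrow> tmf b c * tmf c d" using P_mult[OF assms(2)] by simp
  then show "tmf b c * tmf c d = tmf b d" unfolding tmf_P[of b d] by (simp add: limI)
next
  have sm: "strict_mono (\<lambda>M::nat. 2*M+1)" by (rule strict_monoI) simp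
  have "(P b c \<circ> (\<lambda>M::nat. 2*M+1)) \<longlonglongrightarrow> tmf b c"
    by (rule LIMSEQ_subseq_LIMSEQ[OF P_lim[OF assms(1,2)] sm])
  then have l1: "(\<lambda>M. P b c (2*M+1)) \<longlonglongrightarrow> tmf b c" by (simp add: o_def)
  have "(\<lambda>M. ((c + 1) / (b + 1)) * P (b/2) (c/2) M * P ((c+1)/2) ((b+1)/2) M)
         \<longlonglongrightarrow> ((c + 1) / (b + 1)) * tmf (b / 2) (c / 2) * tmf ((c + 1) / 2) ((b + 1) / 2)"
    by (intro tendsto_mult tendsto_const P_lim adm_half assms)
  then have l2: "(\<lambda>M. P b c (2*M+1)) \<longlonglongrightarrow> ((c + 1) / (b + 1)) * tmf (b / 2) (c / 2) * tmf ((c + 1) / 2) ((b + 1) / 2)"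
    by (simp only: P_split)
  show "tmf b c = ((c + 1) / (b + 1)) * tmf (b / 2) (c / 2) * tmf ((c + 1) / 2) ((b + 1) / 2)"
    by (rule LIMSEQ_unique[OF l1 l2])
qed

end
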